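(* Let $\mathcal C=\{1,\dots,n\}$, let $L$ be an evaluation scale (as in the context), let $\mu:2^{\mathcal C}\to L$ be a capacity, let $q\in\{1,\dots,n\}$ and let $x=(x_1,\dots,x_n)\in L^{n}$. (1) If $\mu$ is $q$-maxitive, then $$S_\mu(x)=\max_{A\subseteq\mathcal C,\ A\neq\emptyset,\ |A|\le q}\ \min\Big(\min_{i\in A}x_i,\ \mu(A)\Big).$$ (2) If $\mu$ is $q$-minitive, then $$S_\mu(x)=\min_{A\subsetneq\mathcal C,\ |A|\ge n-q}\ \max\Big(\max_{i\in \overline A}x_i,\ \mu(A)\Big),$$ where $\overline A=\mathcal C\setminus A$.
   Context: $L$ is either a finite totally ordered set $0=\xi_1<\xi_2<\dots<\xi_l=1$ or $L=[0,1]$. A capacity is a map $\mu:2^{\mathcal C}\to L$ with $\mu(\emptyset)=0$, $\mu(\mathcal C)=1$ and $A\subseteq B\Rightarrow\mu(A)\le\mu(B)$. The Sugeno integral of $x\in L^n$ w.r.t. $\mu$ is $S_\mu(x)=\max_{A\subseteq\mathcal C}\min(\min_{i\in A}x_i,\mu(A))$ (with $\min_{i\in\emptyset}x_i=1$), which equals $\min_{A\subseteq\mathcal C}\max(\max_{i\in\overline A}x_i,\mu(A))$ (with $\max_{i\in\emptyset}x_i=0$). A capacity $\mu$ is $q$-maxitive if for all $X\subseteq\mathcal C$ with $|X|>q$, $\mu(X)=\max_{Y\subsetneq X,\ |Y|\le q}\mu(Y)$; it is $q$-minitive if for all $X\subseteq\mathcal C$ with $|X|<n-q$, $\mu(X)=\min_{Y\supsetneq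 X,\ |Y|\ge n-q}\mu(Y)$. *)

theory Defs
  imports Complex_Main
begin

text \<open>Evaluation scale: either [0,1] or a finite chain 0 = xi_1 < ... < xi_l = 1,
  represented as a finite subset of [0,1] containing 0 and 1.\<close>
definition eval_scale :: "real set \<Rightarrow> bool" where
  "eval_scale L \<longleftrightarrow> L = {0..1} \<or> (finite L \<and> 0 \<in> L \<and> 1 \<in> L \<and> L \<subseteq> {0..1})"

abbreviation crit :: "nat \<Rightarrow> nat set" where
  "crit n \<equiv> {1..n}"

definition capacity :: "nat \<Rightarrow> real set \<Rightarrow> (nat set \<Rightarrow> real) \<Rightarrow> bool" where
  "capacity n L \<mu> \<longleftrightarrow> (\<forall>A. A \<subseteq> crit n \<longrightarrow> \<mu> A \<in> L) \<and> \<mu> {} = 0 \<and> \<mu> (crit n) = 1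
     \<and> (\<forall>A B. A \<subseteq> B \<and> B \<subseteq> crit n \<longrightarrow> \<mu> A \<le> \<mu> B)"

definition minL :: "real set \<Rightarrow> real" where
  "minL S = (if S = {} then 1 else Min S)"

definition maxL :: "real set \<Rightarrow> real" where
  "maxL S = (if S = {} then 0 else Max S)"

definition sugeno :: "nat \<Rightarrow> (nat set \<Rightarrow> real) \<Rightarrow> (nat \<Rightarrow> real) \<Rightarrow> real" where
  "sugeno n \<mu> x = Max ((\<lambda>A. min (minL (x ` A)) (\<mu> A)) ` Pow (crit n))"

definition q_maxitive :: "nat \<Rightarrow> nat \<Rightarrow> (nat set \<Rightarrow> real) \<Rightarrow> bool" where
  "q_maxitive n q \<mu> \<longleftrightarrow> (\<forall>X. X \<subseteq> crit n \<and> card X > q \<longrightarrow>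
     \<mu> X = Max (\<mu> ` {Y. Y \<subset> X \<and> card Y \<le> q}))"

definition q_minitive :: "nat \<Rightarrow> nat \<Rightarrow> (nat set \<Rightarrow> real) \<Rightarrow> bool" where
  "q_minitive n q \<mu> \<longleftrightarrow> (\<forall>X. X \<subseteq> crit n \<and> card X < n - q \<longrightarrow>
     \<mu> X = Min (\<mu> ` {Y. X \<subset> Y \<and> Y \<subseteq> crit n \<and> card Y \<ge> n - q}))"

end

theory Submission
  imports Defs
begin

lemma minL_le: "finite S \<Longrightarrow> s \<in> S \<Longrightarrow> minL S \<le> s"
  unfolding minL_def by auto

lemma minL_gt: "finite S \<Longrightarrow> S \<noteq> {} \<Longrightarrow> \<forall>s\<in>S. t < s \<Longrightarrow> t < minL S"
  unfolding minL_def by auto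

lemma maxL_ge: "finite S \<Longrightarrow> s \<in> S \<Longrightarrow> s \<le> maxL S"
  unfolding maxL_def by auto

lemma maxL_le: "finite S \<Longrightarrow> \<forall>s\<in>S. s \<le> t \<Longrightarrow> 0 \<le> t \<Longrightarrow> maxL S \<le> t"
  unfolding maxL_def by auto

lemma minL_mono: "finite A \<Longrightarrow> Y \<subseteq> A \<Longrightarrow> Y \<noteq> {} \<Longrightarrow> minL (x ` A) \<le> minL (x ` Y)"
  unfolding minL_def by (auto intro!: Min_antimono)

theorem lemma1:
  fixes n q :: nat and L :: "real set" and \<mu> :: "nat set \<Rightarrow> real" and x :: "nat \<Rightarrow> real"
  assumes "eval_scale L"
    and "capacity n L \<mu>"
    and "1 \<le> q" and "q \<le> n"
    and "\<forall>i\<in>crit n. x i \<in> L"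
  shows "(q_maxitive n q \<mu> \<longrightarrow>
            sugeno n \<mu> x = Max ((\<lambda>A. min (minL (x ` A)) (\<mu> A)) `
                               {A. A \<subseteq> crit n \<and> A \<noteq> {} \<and> card A \<le> q}))
       \<and> (q_minitive n q \<mu> \<longrightarrow>
            sugeno n \<mu> x = Min ((\<lambda>A. max (maxL (x ` (crit n - A))) (\<mu> A)) `
                               {A. A \<subset> crit n \<and> card A \<ge> n - q}))"
proof -
  define C where "C = crit n"
  define f where "f = (\<lambda>A. min (minL (x ` A)) (\<mu> A))"
  define g where "g = (\<lambda>A. max (maxL (x ` (C - A))) (\<mu> A))"
  have LL: "L \<subseteq> {0..1}" using assms(1) unfolding eval_scale_def by auto
  have x01: "\<And>i. i \<in> C \<Longrightarrow> 0 \<le> x i \<and> x i \<le> 1"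
  proof -
    fix i assume "i \<in> C"
    then have "x i \<in> L" using assms(5) C_def by blast
    then show "0 \<le> x i \<and> x i \<le> 1" using LL by auto
  qed
  have cap: "\<And>A. A \<subseteq> C \<Longrightarrow> \<mu> A \<in> L" "\<mu> {} = 0" "\<mu> C = 1"
    "\<And>A B. A \<subseteq> B \<Longrightarrow> B \<subseteq> C \<Longrightarrow> \<mu> A \<le> \<mu> B"
    using assms(2) unfolding capacity_def C_def by auto
  have mu01: "\<And>A. A \<subseteq> C \<Longrightarrow> 0 \<le> \<mu> A \<and> \<mu> A \<le> 1"
  proof -
    fix A assume "A \<subseteq> C"
    then have "\<mu> A \<in> L" by (rule cap(1))
    then show "0 \<le> \<mu> A \<and> \<mu> A \<le> 1" using LL by auto
  qed
  have finC: "finite C" by (simp add: C_def)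
  have n1: "1 \<in> C" using assms(3,4) C_def by auto
  have sug: "sugeno n \<mu> x = Max (f ` Pow C)" unfolding sugeno_def f_def C_def by simp
  have finP: "finite (f ` Pow C)" using finC by simp
  have f0: "f {} = 0" unfolding f_def minL_def using cap(2) by simp
  have sge: "\<And>A. A \<subseteq> C \<Longrightarrow> f A \<le> sugeno n \<mu> x" unfolding sug using finP by (auto intro!: Max_ge)
  have P1: "q_maxitive n q \<mu> \<longrightarrow> sugeno n \<mu> x = Max (f ` {A. A \<subseteq> C \<and> A \<noteq> {} \<and> card A \<le> q})"
  proof
    assume qm: "q_maxitive n q \<mu>"
    define S where "S = {A. A \<subseteq> C \<and> A \<noteq> {} \<and> card A \<le> q}"
    have finS: "finite (f ` S)"
    proof -
      have "S \<subseteq> Pow C" unfolding S_def by blast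
      then show ?thesis using finC by (simp add: finite_subset)
    qed
    have 1: "{1} \<in> S" using n1 assms(3) unfolding S_def by auto
    have f1: "0 \<le> f {1}" unfolding f_def minL_def using x01[OF n1] mu01[of "{1}"] n1 by auto
    have MS: "f {1} \<le> Max (f ` S)" using finS 1 by auto
    have "Max (f ` Pow C) \<le> Max (f ` S)"
    proof (rule Max.boundedI[OF finP])
      show "f ` Pow C \<noteq> {}" by auto
    next
      fix a assume "a \<in> f ` Pow C"
      then obtain A where A: "A \<subseteq> C" "a = f A" by auto
      show "a \<le> Max (f ` S)"
      proof (cases "A = {}")
        case True then show ?thesis using A f0 f1 MS by simp
      next
        case ne: False
        show ?thesis
        proof (cases "card A \<le> q")
          case True
          then have "A \<in> S" using A ne S_def by auto
          then show ?thesis using A finS by auto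
        next
          case False
          define Ys where "Ys = {Y. Y \<subset> A \<and> card Y \<le> q}"
          have qA: "q < card A" using False by simp
          have "\<mu> A = Max (\<mu> ` Ys)" unfolding Ys_def
            using qm[unfolded q_maxitive_def, rule_format, of A] A(1) qA C_def by blast
          moreover have "finite (\<mu> ` Ys)"
          proof -
            have "Ys \<subseteq> Pow C" unfolding Ys_def using A(1) by blast
            then show ?thesis using finC by (simp add: finite_subset)
          qed
          moreover have ne_Ys: "{} \<in> Ys" using ne Ys_def by auto
          ultimately have eqM: "\<mu> A = Max (\<mu> ` Ys)" and memM: "Max (\<mu> ` Ys) \<in> \<mu> ` Ys"
            using Max_in[of "\<mu> ` Ys"] by blast+
          from memM obtain Y where Y0: "Max (\<mu> ` Ys) = \<mu> Y" "Y \<in> Ys" by (rule imageE)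
          have Y: "Y \<in> Ys" "\<mu> A = \<mu> Y" using Y0 eqM by simp_all
          show ?thesis
          proof (cases "Y = {}")
            case True
            then have "f A \<le> 0" using Y cap(2) unfolding f_def by simp
            then show ?thesis using A f1 MS by simp
          next
            case False
            then have "Y \<in> S" using Y A unfolding Ys_def S_def by auto
            then have "f Y \<le> Max (f ` S)" using finS by auto
            moreover have "f A \<le> f Y" unfolding f_def using Y minL_mono[of A Y x] finite_subset[OF A(1) finC] False
              unfolding Ys_def by auto
            ultimately show ?thesis using A by simp
          qed
        qed
      qed
    qed
    moreover have "Max (f ` S) \<le> Max (f ` Pow C)"
    proof (rule Max_mono)
      show "f ` S \<subseteq> f ` Pow C" unfolding S_def by blast
      show "f ` S \<noteq> {}" using 1 by blast
      show "finite (f ` Pow C)" by (rule finP)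
    qed
    ultimately show "sugeno n \<mu> x = Max (f ` {A. A \<subseteq> C \<and> A \<noteq> {} \<and> card A \<le> q})"
      using sug S_def by simp
  qed
  have P2: "q_minitive n q \<mu> \<longrightarrow> sugeno n \<mu> x = Min (g ` {A. A \<subset> C \<and> card A \<ge> n - q})"
  proof
    assume qm: "q_minitive n q \<mu>"
    define T where "T = {A. A \<subset> C \<and> card A \<ge> n - q}"
    have finT: "finite (g ` T)"
    proof -
      have "T \<subseteq> Pow C" unfolding T_def by blast
      then show ?thesis using finC by (simp add: finite_subset)
    qed
    have cardC: "card C = n" by (simp add: C_def)
    have "card (C - {1}) = n - 1" using n1 cardC finC by simp
    then have 1: "C - {1} \<in> T" using n1 assms(3) unfolding T_def by auto
    have g1: "\<And>B. B \<subseteq> C \<Longrightarrow> g B \<le> 1" unfolding g_def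
      using mu01 x01 finC by (auto intro!: maxL_le)
    have t0: "0 \<le> sugeno n \<mu> x" using sge[of "{}"] f0 by simp
    have "sugeno n \<mu> x \<le> Min (g ` T)"
    proof (rule Min.boundedI[OF finT])
      show "g ` T \<noteq> {}" using 1 by auto
    next
      fix b assume "b \<in> g ` T"
      then obtain B where B: "B \<in> T" "b = g B" by auto
      have BC: "B \<subseteq> C" using B T_def by auto
      have "Max (f ` Pow C) \<le> g B"
      proof (rule Max.boundedI[OF finP])
        show "f ` Pow C \<noteq> {}" by auto
      next
        fix a assume "a \<in> f ` Pow C"
        then obtain A where A: "A \<subseteq> C" "a = f A" by auto
        show "a \<le> g B"
        proof (cases "A \<subseteq> B")
          case True
          then show ?thesis using A cap(4)[OF True BC] unfolding f_def g_def by auto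
        next
          case False
          then obtain i where i: "i \<in> A" "i \<notin> B" by auto
          have "minL (x ` A) \<le> x i" using i finite_subset[OF A(1) finC] by (auto intro: minL_le)
          moreover have "x i \<le> maxL (x ` (C - B))" using i A finC by (auto intro: maxL_ge)
          ultimately show ?thesis using A unfolding f_def g_def by auto
        qed
      qed
      then show "sugeno n \<mu> x \<le> b" using sug B by simp
    qed
    moreover have "Min (g ` T) \<le> sugeno n \<mu> x"
    proof (cases "1 \<le> sugeno n \<mu> x")
      case True
      have "Min (g ` T) \<le> g (C - {1})" using finT 1 by auto
      then show ?thesis using g1[of "C - {1}"] True by auto
    next
      case False
      define t where "t = sugeno n \<mu> x"
      define B where "B = {i \<in> C. x i > t}"
      have BC: "B \<subseteq> C" using B_def by auto
      have mB: "\<mu> B \<le> t"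
      proof (cases "B = {}")
        case True then show ?thesis using cap(2) t0 t_def by simp
      next
        case False
        have "t < minL (x ` B)" using False finite_subset[OF BC finC]
          by (intro minL_gt) (auto simp: B_def)
        moreover have "f B \<le> t" using sge[OF BC] t_def by simp
        ultimately show ?thesis unfolding f_def by auto
      qed
      have mxB: "\<And>Y. B \<subseteq> Y \<Longrightarrow> maxL (x ` (C - Y)) \<le> t"
        using finC t0 t_def by (intro maxL_le) (auto simp: B_def)
      have BneC: "B \<noteq> C" using mB cap(3) False t_def by auto
      show ?thesis
      proof (cases "n - q \<le> card B")
        case True
        then have "B \<in> T" using BC BneC T_def by auto
        then have "Min (g ` T) \<le> g B" using finT by auto
        also have "g B \<le> t" using mB mxB[of B] g_def by auto
        finally show ?thesis using t_def by simp
      next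
        case False
        define Ys where "Ys = {Y. B \<subset> Y \<and> Y \<subseteq> C \<and> card Y \<ge> n - q}"
        have "card B < n - q" using False by simp
        then have "\<mu> B = Min (\<mu> ` Ys)" unfolding Ys_def
          using qm[unfolded q_minitive_def, rule_format, of B] BC C_def by blast
        moreover have "finite (\<mu> ` Ys)"
        proof -
          have "Ys \<subseteq> Pow C" unfolding Ys_def by blast
          then show ?thesis using finC by (simp add: finite_subset)
        qed
        moreover have ne_Ys: "C \<in> Ys" using BC BneC cardC Ys_def by auto
        ultimately have eqM: "\<mu> B = Min (\<mu> ` Ys)" and memM: "Min (\<mu> ` Ys) \<in> \<mu> ` Ys"
            using Min_in[of "\<mu> ` Ys"] by blast+
        from memM obtain Y where Y0: "Min (\<mu> ` Ys) = \<mu> Y" "Y \<in> Ys" by (rule imageE)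
          have Y: "Y \<in> Ys" "\<mu> B = \<mu> Y" using Y0 eqM by simp_all
        have "Y \<noteq> C" using Y mB cap(3) \<open>\<not> 1 \<le> sugeno n \<mu> x\<close> t_def by auto
        then have "Y \<in> T" using Y Ys_def T_def by auto
        then have "Min (g ` T) \<le> g Y" using finT by auto
        also have "g Y \<le> t" using mB Y mxB[of Y] g_def Ys_def by auto
        finally show ?thesis using t_def by simp
      qed
    qed
    ultimately show "sugeno n \<mu> x = Min (g ` {A. A \<subset> C \<and> card A \<ge> n - q})" using T_def by simp
  qed
  show ?thesis using P1 P2 unfolding f_def g_def C_def by simp
qed

end
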